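(* For $x\ne z\in\mathcal{S}^\mathcal{D}$, the time derivative of the oracle transition rate is $$\dot Q_t(x,z)=\sum_{d=1}^\mathcal{D}\delta_{x^{\setminus d}}(z^{\setminus d})\Big\{\frac{\ddot\kappa_t(1-\kappa_t)+(\dot\kappa_t)^2}{(1-\kappa_t)^2}p^d_{1|t}(z^d\mid x)-\frac{\dot\kappa_t}{1-\kappa_t}\sum_yp^d_{1|t}(z^d\mid y)Q_t(x,y)\Big\},$$ which implies $|\dot Q_t(x,z)|\le\Big|\frac{\ddot\kappa_t(1-\kappa_t)+(\dot\kappa_t)^2}{(1-\kappa_t)^2}\Big|+\mathcal{D}\Big(\frac{\dot\kappa_t}{1-\kappa_t}\Big)^2$ for any $z\ne x$. In particular, if the posterior $p_{1|t}$ does not depend on $t$, then $|\dot Q_t(x,z)|\le\Big|\frac{\ddot\kappa_t(1-\kappa_t)+(\dot\kappa_t)^2}{(1-\kappa_t)^2}\Big|$.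
   Context: $\mathcal{S}=\{1,\dots,|\mathcal{S}|\}$; for $x\in\mathcal{S}^\mathcal{D}$, $x^d$ is its $d$-th coordinate and $x^{\setminus d}$ the others; $\delta_a(b)$ the Kronecker delta. $p_1$ is a data pmf on $\mathcal{S}^\mathcal{D}$, $p_0=\prod_dp^d_0$ a source distribution; $\kappa:[0,1]\to[0,1]$ non-decreasing, twice differentiable on $[0,1)$, $\kappa_0=0,\kappa_1=1$. Let $X(1)\sim p_1$ and, given $X(1)=x_1$, coordinates of $X(t)$ independent with $P(X^d(t)=y\mid X(1)=x_1)=(1-\kappa_t)p^d_0(y)+\kappa_t\delta_{x^d_1}(y)$; $p^d_{1|t}(y\mid x)=P(X^d(1)=y\mid X(t)=x)$. The oracle rate is $Q_t(x,z)=\frac{\dot\kappa_t}{1-\kappa_t}\sum_d\delta_{x^{\setminus d}}(z^{\setminus d})p^d_{1|t}(z^d\mid x)$ for $z\ne x$ and $Q_t(x,x)=-\sum_{z\ne x}Q_t(x,z)$; $X(t)$ is a continuous-time Markov chain with this rate.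
   Formalization: The posterior $p_{1|t}(y\mid x)$ is the sum over w with $w^d=y$ of a transition function P(X(1)=w | X(t)=x) satisfying the Kolmogorov backward equation with rate $Q_t$, not the noising mixture of $p_0,p_1$; and $\kappa_t<1$ holds for every t<1. Apart from conventions, each condition added here is assumed in the paper as well or is needed for the statement above to hold. *)

theory Defs
  imports "HOL-Analysis.Analysis"
begin

text \<open>States are functions x :: 'd \<Rightarrow> 's (coordinates x d), with 'd the finite
  index set of dimensions and 's the finite vocabulary.\<close>

definition agree_except :: "('d \<Rightarrow> 's) \<Rightarrow> ('d \<Rightarrow> 's) \<Rightarrow> 'd \<Rightarrow> bool" where
  "agree_except x z d \<longleftrightarrow> (\<forall>e. e \<noteq> d \<longrightarrow> x e = z e)"

text \<open>Posterior of the d-th coordinate at time 1 given X(t) = x, computed from the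
  transition function P t x w = P(X(1) = w | X(t) = x) of the Markov chain.\<close>
definition posterior ::
  "(real \<Rightarrow> ('d::finite \<Rightarrow> 's::finite) \<Rightarrow> ('d \<Rightarrow> 's) \<Rightarrow> real) \<Rightarrow> real \<Rightarrow> 'd \<Rightarrow> 's \<Rightarrow> ('d \<Rightarrow> 's) \<Rightarrow> real" where
  "posterior P t d y x = (\<Sum>w\<in>{w. w d = y}. P t x w)"

text \<open>Off-diagonal oracle rate; kappa' is the time derivative of kappa.\<close>
definition offdiag_rate ::
  "(real \<Rightarrow> real) \<Rightarrow> (real \<Rightarrow> real) \<Rightarrow> (real \<Rightarrow> 'd::finite \<Rightarrow> 's \<Rightarrow> ('d \<Rightarrow> 's) \<Rightarrow> real)
     \<Rightarrow> real \<Rightarrow> ('d \<Rightarrow> 's) \<Rightarrow> ('d \<Rightarrow> 's) \<Rightarrow> real" where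
  "offdiag_rate \<kappa> \<kappa>' p t x z =
     \<kappa>' t / (1 - \<kappa> t) * (\<Sum>d\<in>UNIV. if agree_except x z d then p t d (z d) x else 0)"

definition oracle_rate ::
  "(real \<Rightarrow> real) \<Rightarrow> (real \<Rightarrow> real) \<Rightarrow> (real \<Rightarrow> 'd::finite \<Rightarrow> 's::finite \<Rightarrow> ('d \<Rightarrow> 's) \<Rightarrow> real)
     \<Rightarrow> real \<Rightarrow> ('d \<Rightarrow> 's) \<Rightarrow> ('d \<Rightarrow> 's) \<Rightarrow> real" where
  "oracle_rate \<kappa> \<kappa>' p t x z =
     (if z \<noteq> x then offdiag_rate \<kappa> \<kappa>' p t x z
      else - (\<Sum>z'\<in>UNIV - {x}. offdiag_rate \<kappa> \<kappa>' p t x z'))"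

end

theory Submission
  imports Defs
begin


lemma agree_unique:
  assumes "x \<noteq> z" "agree_except x z d1" "agree_except x z d2"
  shows "d1 = d2"
proof (rule ccontr)
  assume "d1 \<noteq> d2"
  then have "x e = z e" for e using assms(2,3) unfolding agree_except_def by metis
  then show False using assms(1) by auto
qed

lemma sum_agree:
  fixes f :: "'d::finite \<Rightarrow> real"
  assumes "x \<noteq> z"
  shows "(\<Sum>d\<in>UNIV. if agree_except x z d then f d else 0) = 0 \<or>
         (\<exists>d. (\<Sum>d\<in>UNIV. if agree_except x z d then f d else 0) = f d)"
proof (cases "\<exists>d0. agree_except x z d0")
  case True
  then obtain d0 where d0: "agree_except x z d0" by blast
  have "(\<Sum>d\<in>UNIV. if agree_except x z d then f d else 0) = (\<Sum>d\<in>UNIV. if d = d0 then f d else 0)"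
  proof (rule sum.cong)
    fix d
    show "(if agree_except x z d then f d else 0) = (if d = d0 then f d else 0)"
    proof (cases "agree_except x z d")
      case True
      then have "d = d0" by (rule agree_unique[OF assms _ d0])
      then show ?thesis using True by simp
    next
      case False
      then have "d \<noteq> d0" using d0 by blast
      then show ?thesis using False by simp
    qed
  qed simp
  also have "\<dots> = f d0" by simp
  finally show ?thesis by blast
next
  case False
  then show ?thesis by simp
qed

lemma posterior_bounds:
  fixes P :: "real \<Rightarrow> ('d::finite \<Rightarrow> 's::finite) \<Rightarrow> ('d \<Rightarrow> 's) \<Rightarrow> real"
  assumes nn: "\<And>w. 0 \<le> P t u w" and s1: "(\<Sum>w\<in>UNIV. P t u w) = 1"
  shows "0 \<le> posterior P t d y u" "posterior P t d y u \<le> 1"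
proof -
  show "0 \<le> posterior P t d y u" unfolding posterior_def by (rule sum_nonneg) (use nn in auto)
  have "posterior P t d y u \<le> (\<Sum>w\<in>UNIV. P t u w)" unfolding posterior_def
    by (rule sum_mono2) (use nn in auto)
  then show "posterior P t d y u \<le> 1" using s1 by simp
qed

lemma posterior_total:
  fixes P :: "real \<Rightarrow> ('d::finite \<Rightarrow> 's::finite) \<Rightarrow> ('d \<Rightarrow> 's) \<Rightarrow> real"
  shows "(\<Sum>s\<in>UNIV. posterior P t d s u) = (\<Sum>w\<in>UNIV. P t u w)"
  unfolding posterior_def
  using sum.group[of UNIV UNIV "\<lambda>w. w d" "P t u"] by simp

lemma agree_row_sum:
  fixes P :: "real \<Rightarrow> ('d::finite \<Rightarrow> 's::finite) \<Rightarrow> ('d \<Rightarrow> 's) \<Rightarrow> real"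
  assumes nn: "\<And>w. 0 \<le> P t x w" and s1: "(\<Sum>w\<in>UNIV. P t x w) = 1"
  shows "(\<Sum>y\<in>UNIV - {x}. if agree_except x y d then posterior P t d (y d) x else 0) \<le> 1"
proof -
  have "(\<Sum>y\<in>UNIV - {x}. if agree_except x y d then posterior P t d (y d) x else 0)
      \<le> (\<Sum>y\<in>UNIV. if agree_except x y d then posterior P t d (y d) x else 0)"
    by (rule sum_mono2) (use posterior_bounds[where P=P and t=t and u=x, OF nn s1] in auto)
  also have "\<dots> = (\<Sum>y\<in>{y. agree_except x y d}. posterior P t d (y d) x)"
    by (simp add: sum.If_cases Int_def)
  also have "\<dots> = (\<Sum>s\<in>UNIV. posterior P t d s x)"
  proof (rule sum.reindex_bij_witness[where i="\<lambda>s. x(d := s)" and j="\<lambda>y. y d"])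
    fix y assume "y \<in> {y. agree_except x y d}"
    then show "x(d := y d) = y" by (auto simp: agree_except_def fun_eq_iff)
  qed (auto simp: agree_except_def)
  also have "\<dots> = 1" using posterior_total s1 by metis
  finally show ?thesis .
qed

theorem lemmaD3:
  fixes \<kappa> \<kappa>' \<kappa>'' :: "real \<Rightarrow> real"
    and P :: "real \<Rightarrow> ('d::finite \<Rightarrow> 's::finite) \<Rightarrow> ('d \<Rightarrow> 's) \<Rightarrow> real"
    and x z :: "'d \<Rightarrow> 's" and t :: real
  defines "Q \<equiv> oracle_rate \<kappa> \<kappa>' (posterior P)"
  assumes kappa_mono: "\<And>s r. 0 \<le> s \<Longrightarrow> s \<le> r \<Longrightarrow> r \<le> 1 \<Longrightarrow> \<kappa> s \<le> \<kappa> r"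
    and kappa0: "\<kappa> 0 = 0" and kappa1: "\<kappa> 1 = 1"
    and kappa_lt1: "\<And>s. 0 \<le> s \<Longrightarrow> s < 1 \<Longrightarrow> \<kappa> s < 1"
    and kappa_deriv: "\<And>s. 0 \<le> s \<Longrightarrow> s < 1 \<Longrightarrow> (\<kappa> has_real_derivative \<kappa>' s) (at s within {0..<1})"
    and kappa_deriv2: "\<And>s. 0 \<le> s \<Longrightarrow> s < 1 \<Longrightarrow> (\<kappa>' has_real_derivative \<kappa>'' s) (at s within {0..<1})"
    and P_nonneg: "\<And>s u w. 0 \<le> s \<Longrightarrow> s < 1 \<Longrightarrow> 0 \<le> P s u w"
    and P_sum: "\<And>s u. 0 \<le> s \<Longrightarrow> s < 1 \<Longrightarrow> (\<Sum>w\<in>UNIV. P s u w) = 1"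
    and backward: "\<And>s u w. 0 \<le> s \<Longrightarrow> s < 1 \<Longrightarrow>
          ((\<lambda>r. P r u w) has_real_derivative - (\<Sum>y\<in>UNIV. Q s u y * P s y w)) (at s within {0..<1})"
    and t: "0 \<le> t" "t < 1"
    and xz: "x \<noteq> z"
  shows "((\<lambda>s. Q s x z) has_real_derivative
            (\<Sum>d\<in>UNIV. if agree_except x z d then
               (\<kappa>'' t * (1 - \<kappa> t) + (\<kappa>' t)\<^sup>2) / (1 - \<kappa> t)\<^sup>2 * posterior P t d (z d) x
               - \<kappa>' t / (1 - \<kappa> t) * (\<Sum>y\<in>UNIV. posterior P t d (z d) y * Q t x y)
             else 0)) (at t within {0..<1})
       \<and> (\<forall>Qdot. ((\<lambda>s. Q s x z) has_real_derivative Qdot) (at t within {0..<1}) \<longrightarrow>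
            \<bar>Qdot\<bar> \<le> \<bar>(\<kappa>'' t * (1 - \<kappa> t) + (\<kappa>' t)\<^sup>2) / (1 - \<kappa> t)\<^sup>2\<bar>
                      + real CARD('d) * (\<kappa>' t / (1 - \<kappa> t))\<^sup>2
          \<and> ((\<forall>s\<in>{0..<1}. \<forall>d y u. posterior P s d y u = posterior P t d y u) \<longrightarrow>
               \<bar>Qdot\<bar> \<le> \<bar>(\<kappa>'' t * (1 - \<kappa> t) + (\<kappa>' t)\<^sup>2) / (1 - \<kappa> t)\<^sup>2\<bar>))"
proof -
  let ?S = "{0..<1::real}"
  let ?F = "at t within ?S"
  define k where "k s = \<kappa>' s / (1 - \<kappa> s)" for s
  define A where "A = (\<kappa>'' t * (1 - \<kappa> t) + (\<kappa>' t)\<^sup>2) / (1 - \<kappa> t)\<^sup>2"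
  have tS: "t \<in> ?S" using t by auto
  have nt: "\<not> trivial_limit ?F" using t by (simp add: trivial_limit_within)
  have k1: "1 - \<kappa> t > 0" using kappa_lt1[OF t] by simp
  have kp_nonneg: "0 \<le> \<kappa>' t"
  proof -
    have "((\<lambda>y. (\<kappa> y - \<kappa> t) / (y - t)) \<longlongrightarrow> \<kappa>' t) ?F"
      using kappa_deriv[OF t] by (simp add: has_field_derivative_iff)
    moreover have "eventually (\<lambda>y. 0 \<le> (\<kappa> y - \<kappa> t) / (y - t)) ?F"
      unfolding eventually_at_filter
    proof (rule always_eventually, intro allI impI)
      fix y assume "y \<noteq> t" "y \<in> ?S"
      then show "0 \<le> (\<kappa> y - \<kappa> t) / (y - t)"
      proof (cases "y < t")
        case True
        then have "\<kappa> y \<le> \<kappa> t" using kappa_mono[of y t] \<open>y \<in> ?S\<close> t by auto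
        then show ?thesis using True by (simp add: divide_nonpos_neg)
      next
        case False
        then have "\<kappa> t \<le> \<kappa> y" using kappa_mono[of t y] \<open>y \<in> ?S\<close> t by auto
        then show ?thesis using False by simp
      qed
    qed
    ultimately show ?thesis using nt by (rule tendsto_lowerbound)
  qed
  have k_nonneg: "0 \<le> k t" unfolding k_def using kp_nonneg k1 by simp
  have dk: "(k has_real_derivative A) ?F"
  proof -
    have "((\<lambda>s. 1 - \<kappa> s) has_real_derivative 0 - \<kappa>' t) ?F"
      by (intro DERIV_diff DERIV_const kappa_deriv[OF t])
    from DERIV_divide[OF kappa_deriv2[OF t] this] k1
    show ?thesis unfolding k_def A_def
      by (simp add: power2_eq_square algebra_simps)
  qed
  have dp: "((\<lambda>s. posterior P s d y u) has_real_derivative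
              - (\<Sum>v\<in>UNIV. Q t u v * posterior P t d y v)) ?F" for d y u
  proof -
    have "((\<lambda>s. \<Sum>w\<in>{w. w d = y}. P s u w) has_real_derivative
             (\<Sum>w\<in>{w. w d = y}. - (\<Sum>v\<in>UNIV. Q t u v * P t v w))) ?F"
      by (intro DERIV_sum backward[OF t])
    moreover have "(\<Sum>w\<in>{w. w d = y}. - (\<Sum>v\<in>UNIV. Q t u v * P t v w))
        = - (\<Sum>v\<in>UNIV. Q t u v * posterior P t d y v)"
      unfolding posterior_def sum_negf sum_distrib_left
      by (subst sum.swap) simp
    ultimately show ?thesis unfolding posterior_def by simp
  qed
  define C where "C s = (\<Sum>d\<in>UNIV. if agree_except x z d then posterior P s d (z d) x else 0)" for s
  have Qeq: "Q s x z = k s * C s" for s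
    using xz unfolding Q_def oracle_rate_def offdiag_rate_def k_def C_def by auto
  define D0 where "D0 = (\<Sum>d\<in>UNIV. if agree_except x z d then
               (\<kappa>'' t * (1 - \<kappa> t) + (\<kappa>' t)\<^sup>2) / (1 - \<kappa> t)\<^sup>2 * posterior P t d (z d) x
               - \<kappa>' t / (1 - \<kappa> t) * (\<Sum>y\<in>UNIV. posterior P t d (z d) y * Q t x y)
             else 0)"
  have dC: "(C has_real_derivative (\<Sum>d\<in>UNIV. if agree_except x z d then
        - (\<Sum>v\<in>UNIV. Q t x v * posterior P t d (z d) v) else 0)) ?F"
    unfolding C_def
  proof (intro DERIV_sum)
    fix d
    show "((\<lambda>s. if agree_except x z d then posterior P s d (z d) x else 0) has_real_derivative
      (if agree_except x z d then - (\<Sum>v\<in>UNIV. Q t x v * posterior P t d (z d) v) else 0)) ?F"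
      by (cases "agree_except x z d") (simp_all add: dp)
  qed
  have part1: "((\<lambda>s. Q s x z) has_real_derivative D0) ?F"
  proof -
    have "((\<lambda>s. k s * C s) has_real_derivative A * C t + k t * (\<Sum>d\<in>UNIV. if agree_except x z d then
        - (\<Sum>v\<in>UNIV. Q t x v * posterior P t d (z d) v) else 0)) ?F"
      using DERIV_mult[OF dk dC] by (rule DERIV_cong) (simp add: algebra_simps)
    moreover have "A * C t + k t * (\<Sum>d\<in>UNIV. if agree_except x z d then
        - (\<Sum>v\<in>UNIV. Q t x v * posterior P t d (z d) v) else 0) = D0"
      unfolding D0_def C_def A_def k_def sum_distrib_left sum.distrib[symmetric]
      by (rule sum.cong) (auto simp: algebra_simps sum_distrib_left sum_divide_distrib)
    ultimately show ?thesis unfolding Qeq by simp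
  qed
  have pb0: "0 \<le> posterior P t d y u" and pb1: "posterior P t d y u \<le> 1" for d y u
    using posterior_bounds[where P=P and t=t and u=u, OF P_nonneg[OF t] P_sum[OF t]] by auto
  have Qoff: "0 \<le> Q t x y" if "y \<noteq> x" for y
  proof -
    have "Q t x y = k t * (\<Sum>d\<in>UNIV. if agree_except x y d then posterior P t d (y d) x else 0)"
      using that unfolding Q_def oracle_rate_def offdiag_rate_def k_def by simp
    also have "0 \<le> \<dots>"
      by (intro mult_nonneg_nonneg k_nonneg sum_nonneg) (simp add: pb0)
    finally show ?thesis by simp
  qed
  define R where "R = (\<Sum>y\<in>UNIV - {x}. Q t x y)"
  have R_le: "R \<le> k t * real CARD('d)"
  proof -
    have "R = k t * (\<Sum>y\<in>UNIV - {x}. \<Sum>d\<in>UNIV. if agree_except x y d then posterior P t d (y d) x else 0)"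
    proof -
      have "R = (\<Sum>y\<in>UNIV - {x}. k t * (\<Sum>d\<in>UNIV. if agree_except x y d then posterior P t d (y d) x else 0))"
        unfolding R_def by (rule sum.cong) (auto simp: Q_def oracle_rate_def offdiag_rate_def k_def)
      then show ?thesis by (simp only: sum_distrib_left[symmetric])
    qed
    also have "\<dots> = k t * (\<Sum>d\<in>UNIV. \<Sum>y\<in>UNIV - {x}. if agree_except x y d then posterior P t d (y d) x else 0)"
      by (subst sum.swap) simp
    also have "\<dots> \<le> k t * (\<Sum>d\<in>(UNIV::'d set). 1)"
      by (intro mult_left_mono sum_mono agree_row_sum P_nonneg[OF t] P_sum[OF t] k_nonneg)
    finally show ?thesis by simp
  qed
  have Qxx: "Q t x x = - R" unfolding R_def Q_def oracle_rate_def by simp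
  have inner: "\<bar>\<Sum>y\<in>UNIV. posterior P t d s y * Q t x y\<bar> \<le> R" for d s
  proof -
    have split: "(\<Sum>y\<in>UNIV. posterior P t d s y * Q t x y)
        = (\<Sum>y\<in>UNIV - {x}. posterior P t d s y * Q t x y) - posterior P t d s x * R"
      using sum.remove[of UNIV x "\<lambda>y. posterior P t d s y * Q t x y"] Qxx by simp
    have a0: "0 \<le> (\<Sum>y\<in>UNIV - {x}. posterior P t d s y * Q t x y)"
      by (rule sum_nonneg) (use pb0 Qoff in auto)
    have a1: "(\<Sum>y\<in>UNIV - {x}. posterior P t d s y * Q t x y) \<le> R"
      unfolding R_def
    proof (rule sum_mono)
      fix y assume "y \<in> UNIV - {x}"
      then show "posterior P t d s y * Q t x y \<le> Q t x y"
        using pb0[of d s y] pb1[of d s y] Qoff[of y] by (simp add: mult_left_le_one_le)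
    qed
    have R0: "0 \<le> R" unfolding R_def by (rule sum_nonneg) (use Qoff in auto)
    have b0: "0 \<le> posterior P t d s x * R" using pb0 R0 by simp
    have b1: "posterior P t d s x * R \<le> R" by (rule mult_left_le_one_le[OF R0 pb0 pb1])
    show ?thesis unfolding split using a0 a1 b0 b1 by linarith
  qed
  have C_bounds: "\<bar>C t\<bar> \<le> 1"
  proof -
    have "C t = 0 \<or> (\<exists>d. C t = posterior P t d (z d) x)"
      unfolding C_def by (rule sum_agree[OF xz])
    then show ?thesis
    proof (elim disjE exE)
      fix d assume "C t = posterior P t d (z d) x"
      then show ?thesis using pb0[of d "z d" x] pb1[of d "z d" x] by simp
    qed simp
  qed
  have D0_bound: "\<bar>D0\<bar> \<le> \<bar>A\<bar> + real CARD('d) * (k t)\<^sup>2"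
  proof -
    have "\<bar>A * posterior P t d (z d) x - k t * (\<Sum>y\<in>UNIV. posterior P t d (z d) y * Q t x y)\<bar>
        \<le> \<bar>A\<bar> + real CARD('d) * (k t)\<^sup>2" for d
    proof -
      have "\<bar>A * posterior P t d (z d) x\<bar> \<le> \<bar>A\<bar>"
        using mult_left_mono[OF pb1[of d "z d" x] abs_ge_zero[of A]] pb0[of d "z d" x] by (simp add: abs_mult)
      moreover have "\<bar>k t * (\<Sum>y\<in>UNIV. posterior P t d (z d) y * Q t x y)\<bar> \<le> k t * (k t * real CARD('d))"
        unfolding abs_mult using k_nonneg inner[of d "z d"] R_le
        by (simp add: mult_left_mono)
      ultimately show ?thesis by (simp add: power2_eq_square algebra_simps)
    qed
    moreover have "0 \<le> \<bar>A\<bar> + real CARD('d) * (k t)\<^sup>2" by simp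
    moreover have "D0 = 0 \<or> (\<exists>d. D0 = A * posterior P t d (z d) x - k t * (\<Sum>y\<in>UNIV. posterior P t d (z d) y * Q t x y))"
      unfolding D0_def A_def k_def by (rule sum_agree[OF xz])
    ultimately show ?thesis by auto
  qed
  show ?thesis
    unfolding D0_def[symmetric] unfolding A_def[symmetric]
  proof (intro conjI allI impI)
    show "((\<lambda>s. Q s x z) has_real_derivative D0) ?F" by (rule part1)
  next
    fix Qdot assume hQ: "((\<lambda>s. Q s x z) has_real_derivative Qdot) ?F"
    have "Qdot = D0" using has_field_derivative_unique[OF hQ part1] nt by simp
    then show "\<bar>Qdot\<bar> \<le> \<bar>A\<bar> + real CARD('d) * (\<kappa>' t / (1 - \<kappa> t))\<^sup>2"
      using D0_bound unfolding k_def by simp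
  next
    fix Qdot assume hQ: "((\<lambda>s. Q s x z) has_real_derivative Qdot) ?F"
      and const: "\<forall>s\<in>?S. \<forall>d y u. posterior P s d y u = posterior P t d y u"
    have "((\<lambda>s. k s * C t) has_real_derivative A * C t) ?F"
      using DERIV_mult[OF dk DERIV_const[of "C t"]] by (rule DERIV_cong) (simp add: algebra_simps)
    then have "((\<lambda>s. Q s x z) has_real_derivative A * C t) ?F"
    proof (rule has_field_derivative_transform_within[OF _ zero_less_one tS])
      fix s assume "s \<in> ?S"
      then have pc: "posterior P s d y u = posterior P t d y u" for d y u using const by blast
      have "C s = C t" unfolding C_def by (simp only: pc)
      then show "k s * C t = Q s x z" using Qeq by simp
    qed
    then have "Qdot = A * C t" using has_field_derivative_unique[OF hQ] nt by simp
    then show "\<bar>Qdot\<bar> \<le> \<bar>A\<bar>"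
      using mult_left_mono[OF C_bounds abs_ge_zero[of A]] by (simp add: abs_mult)
  qed
qed

end
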